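(* Assume $r\neq0$ and $r+s=0$. Then: (i) For $0\le i\le d-1$: $\bar b^*_i=b^*_{2i}b^*_{2i+1}$ if $0\le i\le\lfloor d/2\rfloor-1$; $\bar b^*_i=\frac{(d+1)r}{2}b^*_{d-1}$ if $i=\lfloor d/2\rfloor$ and $d$ is odd; $\bar b^*_i=\frac{(d+1)r}{2}c^*_d$ if $i=\lfloor d/2\rfloor$ and $d$ is even; $\bar b^*_i=c^*_{2(d-i)}c^*_{2(d-i)+1}$ if $\lfloor d/2\rfloor+1\le i\le d-1$. (ii) For $1\le i\le d$: $\bar c^*_i=c^*_{2i}c^*_{2i-1}$ if $1\le i\le\lfloor d/2\rfloor$; $\bar c^*_i=\frac{(d+1)r}{2}c^*_d$ if $i=\lfloor d/2\rfloor+1$ and $d$ is odd; $\bar c^*_i=\frac{(d+1)r}{2}b^*_{d-1}$ if $i=\lfloor d/2\rfloor+1$ and $d$ is even; $\bar c^*_i=b^*_{2(d-i+1)}b^*_{2(d-i)+1}$ if $\lfloor d/2\rfloor+2\le i\le d$. (iii) For $0\le i\le d$: $\bar k^*_i=k^*_{2i}$ if $0\le i\le\lfloor d/2\rfloor$, and $\bar k^*_i=k^*_{2(d-i)+1}$ if $\lfloor d/2\rfloor+1\le i\le d$.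
   Context: Fix an integer $d\ge0$ and $r,s\in(-1,\infty)$. Write $(x)_i=x(x+1)\cdots(x+i-1)$, $(x)_0=1$. Put $b^*_i=\frac{(d-i)(i-d-s)(2d-2i+r+s+2)_i}{(2d-2i+r+s)_{i+1}}$ ($0\le i\le d-1$), $c^*_i=\frac{i(i-d-r-1)(d-i+r+s+1)_{d-i}}{(d-i+r+s+2)_{d-i+1}}$ ($1\le i\le d$), $k^*_i=\frac{b^*_0\cdots b^*_{i-1}}{c^*_1\cdots c^*_i}$ ($0\le i\le d$). Put $\bar b^*_i=\frac{(d-i)(2d-2i+1)(d-2i-r-1)(d-2i-r)}{2(2d-4i-1)(2d-4i+1)}$ ($0\le i\le d-1$), $\bar c^*_i=\frac{i(2i-1)(d-2i+r+1)(d-2i+r+2)}{2(2d-4i+1)(2d-4i+3)}$ ($1\le i\le d$), and $\bar k^*_i=\frac{\bar b^*_0\cdots\bar b^*_{i-1}}{\bar c^*_1\cdots\bar c^*_i}$ ($0\le i\le d$). *)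

theory Defs
  imports Complex_Main
begin

definition bst :: "nat \<Rightarrow> real \<Rightarrow> real \<Rightarrow> nat \<Rightarrow> real" where
  "bst d r s i = (real d - real i) * (real i - real d - s)
     * pochhammer (2 * real d - 2 * real i + r + s + 2) i
     / pochhammer (2 * real d - 2 * real i + r + s) (i + 1)"

definition cst :: "nat \<Rightarrow> real \<Rightarrow> real \<Rightarrow> nat \<Rightarrow> real" where
  "cst d r s i = real i * (real i - real d - r - 1)
     * pochhammer (real d - real i + r + s + 1) (d - i)
     / pochhammer (real d - real i + r + s + 2) (d - i + 1)"

definition kst :: "nat \<Rightarrow> real \<Rightarrow> real \<Rightarrow> nat \<Rightarrow> real" where
  "kst d r s i = (\<Prod>j<i. bst d r s j) / (\<Prod>j\<in>{1..i}. cst d r s j)"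

definition bbst :: "nat \<Rightarrow> real \<Rightarrow> nat \<Rightarrow> real" where
  "bbst d r i = (real d - real i) * (2 * real d - 2 * real i + 1)
     * (real d - 2 * real i - r - 1) * (real d - 2 * real i - r)
     / (2 * (2 * real d - 4 * real i - 1) * (2 * real d - 4 * real i + 1))"

definition bcst :: "nat \<Rightarrow> real \<Rightarrow> nat \<Rightarrow> real" where
  "bcst d r i = real i * (2 * real i - 1)
     * (real d - 2 * real i + r + 1) * (real d - 2 * real i + r + 2)
     / (2 * (2 * real d - 4 * real i + 1) * (2 * real d - 4 * real i + 3))"

definition bkst :: "nat \<Rightarrow> real \<Rightarrow> nat \<Rightarrow> real" where
  "bkst d r i = (\<Prod>j<i. bbst d r j) / (\<Prod>j\<in>{1..i}. bcst d r j)"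

end

theory Submission
  imports Defs
begin

lemma poch1:
  fixes x :: real assumes "x > 0"
  shows "pochhammer (x+2) n / pochhammer x (n+1) = (x + real n + 1)/(x*(x+1))"
proof -
  have a: "pochhammer x (Suc (Suc n)) = x*(x+1)*pochhammer (x+2) n"
    by (simp add: pochhammer_rec algebra_simps)
  have b: "pochhammer x (Suc (Suc n)) = pochhammer x (n+1) * (x + real n + 1)"
    by (simp add: pochhammer_Suc algebra_simps)
  have Q: "pochhammer x (n+1) > 0" using assms by (simp add: pochhammer_pos)
  have n: "x*(x+1) \<noteq> 0" using assms by simp
  have "pochhammer (x+2) n * (x*(x+1)) = (x + real n + 1) * pochhammer x (n+1)"
    using a b by (simp add: algebra_simps)
  then show ?thesis using Q n by (simp add: frac_eq_eq)
qed
lemma poch2: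
  fixes y :: real assumes "y > 0"
  shows "pochhammer y n / pochhammer (y+1) (n+1) = y/((y+real n)*(y+real n+1))"
proof -
  have a: "y * pochhammer (y+1) n = pochhammer y n * (y + real n)"
    by (metis pochhammer_rec pochhammer_Suc)
  have b: "pochhammer (y+1) (n+1) = pochhammer (y+1) n * (y + real n + 1)"
    by (simp add: pochhammer_Suc algebra_simps)
  have Q: "pochhammer (y+1) n > 0" using assms by (simp add: pochhammer_pos)
  have yn: "y + real n > 0" using assms by simp
  have n: "(y+real n)*(y+real n+1) \<noteq> 0" using yn by simp
  have Q2: "pochhammer (y+1) (n+1) \<noteq> 0" proof -
    have "pochhammer (y+1) (n+1) > 0" using assms by (intro pochhammer_pos) simp
    then show ?thesis by simp
  qed
  have "pochhammer y n * ((y+real n)*(y+real n+1)) = (y * pochhammer (y+1) n) * (y + real n + 1)"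
    using a by simp
  also have "\<dots> = y * pochhammer (y+1) (n+1)" using b by simp
  finally have "pochhammer y n * ((y+real n)*(y+real n+1)) = y * pochhammer (y+1) (n+1)" .
  then show ?thesis using Q2 n by (simp add: frac_eq_eq)
qed
lemma bst_cf:
  assumes "i < d"
  shows "bst d r (-r) i = (real i - real d + r) * (2*real d - real i + 1) / (2*(2*real d - 2*real i + 1))"
proof -
  have x: "2*real d - 2*real i > 0" using assms by simp
  have e: "2 * real d - 2 * real i + r + - r + 2 = (2*real d - 2*real i) + 2" by simp
  have e2: "2 * real d - 2 * real i + r + - r = (2*real d - 2*real i)" by simp
  have "bst d r (-r) i = (real d - real i) * (real i - real d + r) * (pochhammer ((2*real d - 2*real i) + 2) i
     / pochhammer (2*real d - 2*real i) (i + 1))"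
    unfolding bst_def e e2 by simp
  also have "\<dots> = (real d - real i) * (real i - real d + r) * ((2*real d - 2*real i) + real i + 1)/((2*real d - 2*real i)*((2*real d - 2*real i)+1))"
    by (simp only: poch1[OF x]) simp
  also have "\<dots> = (real i - real d + r) * (2*real d - real i + 1) / (2*(2*real d - 2*real i + 1))"
    using x by (simp add: frac_eq_eq) (simp add: algebra_simps)
  finally show ?thesis .
qed
lemma cst_cf:
  assumes "i \<le> d"
  shows "cst d r (-r) i = real i * (real i - real d - r - 1) / (2*(2*real d - 2*real i + 1))"
proof -
  have y: "real d - real i + 1 > 0" using assms by simp
  have e: "real d - real i + r + - r + 2 = (real d - real i + 1) + 1" by simp
  have e2: "real d - real i + r + - r + 1 = (real d - real i + 1)" by simp
  have "cst d r (-r) i = real i * (real i - real d - r - 1) * (pochhammer (real d - real i + 1) (d-i)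
     / pochhammer ((real d - real i + 1) + 1) (d - i + 1))"
    unfolding cst_def e e2 by simp
  also have "\<dots> = real i * (real i - real d - r - 1) * ((real d - real i + 1)/(((real d - real i + 1)+real (d-i))*((real d - real i + 1)+real (d-i)+1)))"
    by (simp only: poch2[OF y])
  also have "\<dots> = real i * (real i - real d - r - 1) / (2*(2*real d - 2*real i + 1))"
    using y assms by (simp add: of_nat_diff frac_eq_eq) (simp add: algebra_simps)
  finally show ?thesis .
qed

lemma ia:
  assumes "2*i+1 < d" 
  shows "bbst d r i = bst d r (-r) (2*i) * bst d r (-r) (2*i+1)"
proof -
  have p1: "2*real d - 4*real i - 1 > 0" "2*real d - 4*real i + 1 > 0" using assms by linarith+
  have p2: "2 * real d - 2 * (2*real i) + 1 > 0" "2 * real d - 2 * (2*real i + 1) + 1 > 0" using p1 by (simp_all add: algebra_simps)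
  show ?thesis using assms p1 p2 by (simp add: bst_cf bbst_def frac_eq_eq) (simp add: algebra_simps)
qed

lemma odd_ne:
  fixes a b :: nat
  shows "2*real a - 4*real b + 1 \<noteq> 0" "2*real a - 4*real b - 1 \<noteq> 0" "2*real a - 4*real b + 3 \<noteq> 0"
proof -
  show "2*real a - 4*real b + 1 \<noteq> 0"
  proof
    assume "2*real a - 4*real b + 1 = 0"
    then have "real (2*a+1) = real (4*b)" by simp
    then have "2*a+1 = 4*b" by (simp only: of_nat_eq_iff)
    then show False by presburger
  qed
  show "2*real a - 4*real b - 1 \<noteq> 0"
  proof
    assume "2*real a - 4*real b - 1 = 0"
    then have "real (2*a) = real (4*b+1)" by simp
    then have "2*a = 4*b+1" by (simp only: of_nat_eq_iff)
    then show False by presburger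
  qed
  show "2*real a - 4*real b + 3 \<noteq> 0"
  proof
    assume "2*real a - 4*real b + 3 = 0"
    then have "real (2*a+3) = real (4*b)" by simp
    then have "2*a+3 = 4*b" by (simp only: of_nat_eq_iff)
    then show False by presburger
  qed
qed

lemma fr: fixes A B C D E F :: real
  shows "B \<noteq> 0 \<Longrightarrow> D \<noteq> 0 \<Longrightarrow> F \<noteq> 0 \<Longrightarrow> A*(D*F) = C*E*B \<Longrightarrow> A/B = (C/D)*(E/F)"
  by (simp add: frac_eq_eq)

lemma id_case:
  assumes "d = i + j" "d + 1 \<le> 2*i"
  shows "bbst d r i = cst d r (-r) (2*j) * cst d r (-r) (2*j+1)"
proof -
  have rd: "real i = real d - real j" using assms by simp
  have 2: "2*j+1 \<le> d" using assms by linarith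
  have n: "2*real d - 4*real i - 1 \<noteq> 0" "2*real d - 4*real i + 1 \<noteq> 0" using assms by linarith+
  show ?thesis unfolding bbst_def
    apply (subst cst_cf, use 2 in simp)+
    apply (rule fr)
    using n apply simp
    using assms apply (simp_all add: algebra_simps)
    done
qed

lemma ib_case:
  "bbst (2*m+1) r m = (real (2*m+1) + 1) * r/2 * bst (2*m+1) r (-r) (2*m)"
  by (simp add: bst_cf bbst_def field_simps)

lemma ic_case:
  "bbst (2*m) r m = (real (2*m) + 1) * r/2 * cst (2*m) r (-r) (2*m)"
  by (simp add: cst_cf bbst_def field_simps)

lemma iia_case:
  assumes "1 \<le> i" "2*i \<le> d"
  shows "bcst d r i = cst d r (-r) (2*i) * cst d r (-r) (2*i-1)"
proof -
  have p1: "2*real d - 4*real i + 1 > 0" "2*real d - 4*real i + 3 > 0" using assms by linarith+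
  have p2: "2 * real d - 2 * (2*real i) + 1 > 0" "2 * real d - 2 * (2*real i - 1) + 1 > 0" using p1 by (simp_all add: algebra_simps)
  show ?thesis using assms p1 p2 by (simp add: cst_cf bcst_def of_nat_diff frac_eq_eq) (simp add: algebra_simps)
qed

lemma iib_case:
  "bcst (2*m+1) r (m+1) = (real (2*m+1) + 1) * r/2 * cst (2*m+1) r (-r) (2*m+1)"
  by (simp add: cst_cf bcst_def field_simps)

lemma iic_case:
  assumes "1 \<le> m"
  shows "bcst (2*m) r (m+1) = (real (2*m) + 1) * r/2 * bst (2*m) r (-r) (2*m-1)"
  using assms by (simp add: bst_cf bcst_def of_nat_diff field_simps)

lemma iid_case:
  assumes "d = i + j" "d + 3 \<le> 2*i"
  shows "bcst d r i = bst d r (-r) (2*j+2) * bst d r (-r) (2*j+1)"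
proof -
  have 2: "2*j+2 < d" using assms by linarith
  have n: "2*real d - 4*real i + 1 \<noteq> 0" "2*real d - 4*real i + 3 \<noteq> 0" using assms by linarith+
  show ?thesis unfolding bcst_def
    apply (subst bst_cf, use 2 in simp)+
    apply (rule fr)
    using n apply simp
    using assms apply (simp_all add: algebra_simps)
    done
qed

lemma kst_Suc: "kst d r s (Suc n) = kst d r s n * bst d r s n / cst d r s (Suc n)"
  unfolding kst_def by (simp add: atLeastAtMostSuc_conv divide_inverse ac_simps)

lemma bkst_Suc: "bkst d r (Suc n) = bkst d r n * bbst d r n / bcst d r (Suc n)"
  unfolding bkst_def by (simp add: atLeastAtMostSuc_conv divide_inverse ac_simps)

lemma bst_nz:
  assumes "r < 1" "j < d" shows "bst d r (-r) j \<noteq> 0"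
proof -
  have "real j - real d + r < 0" "2*real d - real j + 1 > 0" "2*real d - 2*real j + 1 > 0"
    using assms by linarith+
  then show ?thesis using assms by (simp add: bst_cf)
qed

lemma cst_nz:
  assumes "r > -1" "1 \<le> j" "j \<le> d" shows "cst d r (-r) j \<noteq> 0"
proof -
  have "real j - real d - r - 1 < 0" "real j > 0" "2*real d - 2*real j + 1 > 0"
    using assms by linarith+
  then show ?thesis using assms by (simp add: cst_cf)
qed

lemma low_k:
  assumes "i \<le> d div 2"
  shows "bkst d r i = kst d r (-r) (2*i)"
  using assms
proof (induction i)
  case 0
  then show ?case by (simp add: bkst_def kst_def)
next
  case (Suc i)
  have IH: "bkst d r i = kst d r (-r) (2*i)" using Suc by simp
  have a: "bbst d r i = bst d r (-r) (2*i) * bst d r (-r) (2*i+1)"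
    using Suc.prems by (intro ia) presburger
  have b: "bcst d r (Suc i) = cst d r (-r) (2*Suc i) * cst d r (-r) (2*Suc i - 1)"
    using Suc.prems by (intro iia_case) presburger+
  have e: "2 * Suc i = Suc (Suc (2*i))" "2*Suc i - 1 = Suc (2*i)" by simp_all
  show ?case unfolding bkst_Suc IH a b e kst_Suc
    by (simp add: divide_inverse ac_simps)
qed

lemma canc: fixes K x b c :: real
  assumes "K \<noteq> 0" shows "x*(K*b)/(K*c) = x*b/c"
  using assms by (cases "c=0") (simp_all add: field_simps)

lemma high_base:
  assumes r1: "-1 < r" and r2: "r < 1" and r0: "r \<noteq> 0" and le: "d div 2 + 1 \<le> d"
  shows "bkst d r (d div 2 + 1) = kst d r (-r) (2*(d - (d div 2 + 1))+1)"
proof (cases "even d")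
  case False
  then obtain m where d: "d = 2*m+1" using oddE by blast
  have dm: "d div 2 = m" using d by simp
  have K: "(real d + 1) * r/2 \<noteq> 0" using r0 by (simp add: add_pos_nonneg)
  have "bkst d r (d div 2 + 1) = kst d r (-r) (2*m) * ((real d + 1) * r/2 * bst d r (-r) (2*m))
      / ((real d + 1) * r/2 * cst d r (-r) (2*m+1))"
  proof -
    have A: "bbst d r m = (real d + 1) * r/2 * bst d r (-r) (2*m)" unfolding d by (rule ib_case)
    have B: "bcst d r (m+1) = (real d + 1) * r/2 * cst d r (-r) (2*m+1)" unfolding d by (rule iib_case)
    have L: "bkst d r m = kst d r (-r) (2*m)" using low_k[of m d r] dm by simp
    show ?thesis unfolding dm Suc_eq_plus1[symmetric] bkst_Suc
      unfolding Suc_eq_plus1 by (simp only: A B L)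
  qed
  also have "\<dots> = kst d r (-r) (2*m) * bst d r (-r) (2*m) / cst d r (-r) (2*m+1)"
    using K by (rule canc)
  also have "\<dots> = kst d r (-r) (2*(d - (d div 2 + 1))+1)"
    using d kst_Suc[of d r "-r" "2*m"] by simp
  finally show ?thesis .
next
  case True
  then obtain m where d: "d = 2*m" using evenE by blast
  have dm: "d div 2 = m" using d by simp
  have m1: "1 \<le> m" using le d by simp
  have K: "(real d + 1) * r/2 \<noteq> 0" using r0 by (simp add: add_pos_nonneg)
  have Bn: "bst d r (-r) (2*m-1) \<noteq> 0" using bst_nz[OF r2] d m1 by simp
  have Cn: "cst d r (-r) (2*m) \<noteq> 0" using cst_nz[OF r1] d m1 by simp
  have sm: "Suc (2*m-1) = 2*m" using m1 by simp
  have kk: "kst d r (-r) (2*m) = kst d r (-r) (2*m-1) * bst d r (-r) (2*m-1) / cst d r (-r) (2*m)"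
    using kst_Suc[of d r "-r" "2*m-1"] unfolding sm .
  have "bkst d r (d div 2 + 1) = kst d r (-r) (2*m) * ((real d + 1) * r/2 * cst d r (-r) (2*m))
      / ((real d + 1) * r/2 * bst d r (-r) (2*m-1))"
  proof -
    have A: "bbst d r m = (real d + 1) * r/2 * cst d r (-r) (2*m)" unfolding d by (rule ic_case)
    have B: "bcst d r (m+1) = (real d + 1) * r/2 * bst d r (-r) (2*m-1)" unfolding d by (rule iic_case[OF m1])
    have L: "bkst d r m = kst d r (-r) (2*m)" using low_k[of m d r] dm by simp
    show ?thesis unfolding dm Suc_eq_plus1[symmetric] bkst_Suc
      unfolding Suc_eq_plus1 by (simp only: A B L)
  qed
  also have "\<dots> = kst d r (-r) (2*m-1)"
    unfolding kk canc[OF K] using Bn Cn by (simp add: field_simps)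
  also have "\<dots> = kst d r (-r) (2*(d - (d div 2 + 1))+1)"
  proof -
    have "2*(d - (d div 2 + 1))+1 = 2*m-1" using d m1 dm by simp
    then show ?thesis by simp
  qed
  finally show ?thesis .
qed

lemma canc2: fixes x b1 b2 c2 c3 :: real
  assumes "b1 \<noteq> 0" "b2 \<noteq> 0" "c2 \<noteq> 0" "c3 \<noteq> 0"
  shows "x*b1/c2*b2/c3*(c2*c3)/(b2*b1) = x"
  using assms by (simp add: field_simps)

lemma high_k:
  assumes r1: "-1 < r" and r2: "r < 1" and r0: "r \<noteq> 0"
  shows "d div 2 + 1 + k \<le> d \<Longrightarrow> bkst d r (d div 2 + 1 + k) = kst d r (-r) (2*(d - (d div 2 + 1 + k))+1)"
proof (induction k)
  case 0
  then show ?case using high_base[OF r1 r2 r0] by simp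
next
  case (Suc k)
  define i where "i = d div 2 + 1 + k"
  have iS: "d div 2 + 1 + Suc k = Suc i" using i_def by simp
  have il: "i < d" using Suc.prems i_def by simp
  define n where "n = d - i - 1"
  have n: "d - i = Suc n" using il n_def by simp
  have IH: "bkst d r i = kst d r (-r) (2*Suc n+1)" using Suc i_def n by simp
  have d1: "d = i + Suc n" using n Suc.prems i_def by simp
  have d2: "d = Suc i + n" using d1 by simp
  have dd: "d + 1 \<le> 2*i" unfolding i_def by presburger
  have A: "bbst d r i = cst d r (-r) (2*n+2) * cst d r (-r) (2*n+3)"
    using id_case[OF d1] dd by (simp add: eval_nat_numeral)
  have B: "bcst d r (Suc i) = bst d r (-r) (2*n+2) * bst d r (-r) (2*n+1)"
    using iid_case[OF d2] dd by simp
  have le: "2*n+3 \<le> d" using d1 dd by linarith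
  have nz: "bst d r (-r) (2*n+1) \<noteq> 0" "bst d r (-r) (2*n+2) \<noteq> 0"
    "cst d r (-r) (2*n+2) \<noteq> 0" "cst d r (-r) (2*n+3) \<noteq> 0"
    using bst_nz[OF r2] cst_nz[OF r1] le by simp_all
  have K: "kst d r (-r) (2*Suc n+1) = kst d r (-r) (2*n+1) * bst d r (-r) (2*n+1) / cst d r (-r) (2*n+2)
     * bst d r (-r) (2*n+2) / cst d r (-r) (2*n+3)"
    using kst_Suc[of d r "-r" "2*n+1"] kst_Suc[of d r "-r" "2*n+2"] by (simp add: eval_nat_numeral)
  have T: "2*(d - Suc i)+1 = 2*n+1" using n by simp
  show ?case unfolding iS T bkst_Suc IH A B K
    using nz by (intro canc2) (simp_all add: eval_nat_numeral)
qed
theorem lemma3p3: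
  fixes d :: nat and r s :: real
  assumes "r > -1" and "s > -1" and "r \<noteq> 0" and "r + s = 0"
  shows
   "(\<forall>i. i < d \<longrightarrow>
        (i < d div 2 \<longrightarrow> bbst d r i = bst d r s (2*i) * bst d r s (2*i+1)) \<and>
        (i = d div 2 \<and> odd d \<longrightarrow> bbst d r i = (real d + 1) * r / 2 * bst d r s (d - 1)) \<and>
        (i = d div 2 \<and> even d \<longrightarrow> bbst d r i = (real d + 1) * r / 2 * cst d r s d) \<and>
        (d div 2 + 1 \<le> i \<longrightarrow> bbst d r i = cst d r s (2*(d-i)) * cst d r s (2*(d-i)+1)))
    \<and> (\<forall>i. 1 \<le> i \<and> i \<le> d \<longrightarrow>
        (i \<le> d div 2 \<longrightarrow> bcst d r i = cst d r s (2*i) * cst d r s (2*i-1)) \<and>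
        (i = d div 2 + 1 \<and> odd d \<longrightarrow> bcst d r i = (real d + 1) * r / 2 * cst d r s d) \<and>
        (i = d div 2 + 1 \<and> even d \<longrightarrow> bcst d r i = (real d + 1) * r / 2 * bst d r s (d - 1)) \<and>
        (d div 2 + 2 \<le> i \<longrightarrow> bcst d r i = bst d r s (2*(d-i+1)) * bst d r s (2*(d-i)+1)))
    \<and> (\<forall>i. i \<le> d \<longrightarrow>
        (i \<le> d div 2 \<longrightarrow> bkst d r i = kst d r s (2*i)) \<and>
        (d div 2 + 1 \<le> i \<longrightarrow> bkst d r i = kst d r s (2*(d-i)+1)))"
proof -
  have sr: "s = -r" using assms(4) by linarith
  have r1: "-1 < r" and r2: "r < 1" and r0: "r \<noteq> 0" using assms by linarith+
  have P1: "bbst d r i = bst d r (-r) (2*i) * bst d r (-r) (2*i+1)" if h: "i < d div 2" for i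
    using h by (intro ia) presburger
  have P2: "bbst d r i = (real d + 1) * r / 2 * bst d r (-r) (d - 1)" if h: "d div 2 = i" "odd d" for i
  proof -
    obtain m where d: "d = 2*m+1" using h(2) oddE by blast
    have "i = m" using h d by simp
    then show ?thesis using ib_case[of m r] d by simp
  qed
  have P3: "bbst d r i = (real d + 1) * r / 2 * cst d r (-r) d" if h: "d div 2 = i" "even d" for i
  proof -
    obtain m where d: "d = 2*m" using h(2) evenE by blast
    have "i = m" using h d by simp
    then show ?thesis using ic_case[of m r] d by simp
  qed
  have P4: "bbst d r i = cst d r (-r) (2*(d-i)) * cst d r (-r) (2*(d-i)+1)" if h: "d div 2 + 1 \<le> i" "i < d" for i
    using h by (intro id_case) presburger+
  have Q1: "bcst d r i = cst d r (-r) (2*i) * cst d r (-r) (2*i-1)" if h: "1 \<le> i" "i \<le> d div 2" for i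
    using h by (intro iia_case) presburger+
  have Q2: "bcst d r i = (real d + 1) * r / 2 * cst d r (-r) d" if h: "d div 2 + 1 = i" "odd d" for i
  proof -
    obtain m where d: "d = 2*m+1" using h(2) oddE by blast
    have "i = m+1" using h d by simp
    then show ?thesis using iib_case[of m r] d by simp
  qed
  have Q3: "bcst d r i = (real d + 1) * r / 2 * bst d r (-r) (d - 1)" if h: "d div 2 + 1 = i" "even d" "i \<le> d" for i
  proof -
    obtain m where d: "d = 2*m" using h(2) evenE by blast
    have i: "i = m+1" using h d by simp
    have m1: "1 \<le> m" using h d i by simp
    show ?thesis using iic_case[OF m1, of r] d i by simp
  qed
  have Q4: "bcst d r i = bst d r (-r) (2*(d-i+1)) * bst d r (-r) (2*(d-i)+1)" if h: "d div 2 + 2 \<le> i" "i \<le> d" for i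
  proof -
    have "bcst d r i = bst d r (-r) (2*(d-i)+2) * bst d r (-r) (2*(d-i)+1)"
      using h by (intro iid_case) presburger+
    moreover have "2*(d-i+1) = 2*(d-i)+2" by simp
    ultimately show ?thesis by simp
  qed
  have K1: "bkst d r i = kst d r (-r) (2*i)" if h: "i \<le> d div 2" for i
    using low_k h by blast
  have K2: "bkst d r i = kst d r (-r) (2*(d-i)+1)" if h: "d div 2 + 1 \<le> i" "i \<le> d" for i
  proof -
    define k where "k = i - (d div 2 + 1)"
    have i: "i = d div 2 + 1 + k" using h k_def by simp
    show ?thesis using high_k[OF r1 r2 r0, of d k] h unfolding i by simp
  qed
  show ?thesis unfolding sr
    using P1 P2 P3 P4 Q1 Q2 Q3 Q4 K1 K2 by auto
qed
end
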